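(* Let $\{X_1,\ldots,X_{p_n}\}$ be random variables with index set $V=\{1,\ldots,p_n\}$, observed through $n$ i.i.d. samples, and for each pair $i\neq j$ let $e_{ij}=0$ if $X_i$ and $X_j$ are conditionally independent given $\boldsymbol X_{V\setminus\{i,j\}}$ and $e_{ij}=1$ otherwise. For each $i$ let $S_i$ be the set of true variables of the regression $X_i\sim \boldsymbol X_{V\setminus\{i\}}$, and for each pair $j<i$ let $S_{j\setminus i}$ be the set of true variables of the regression $X_j\sim \boldsymbol X_{V\setminus\{i,j\}}$; let $\hat S_i$ and $\hat S_{j\setminus i}$ be the index sets selected from data by a variable selection/screening procedure applied to these two regressions. For each pair $j<i$, let $T_{ij}$ be the statistic of a nonparametric test of $X_i \perp X_j \mid \boldsymbol X_{\hat S_i\cup \hat S_{j\setminus i}\setminus\{j\}}$, let $\mu_{ij}=E(T_{ij})$, and let $\mu_{ij,0}$ and $\mu_{ij,1}$ denote the mean of $T_{ij}$ under the null hypothesis $e_{ij}=0$ and the alternative $e_{ij}=1$, respectively. Assume: (1) the generative distribution of the data is Markov and faithful to a directed acyclic graph; (2) $p_n$ increases as a polynomial of $n$; (3) (uniform sure screening) $\min_{1\le i\le p_n} P(S_i\subset \hat S_i)\to 1$ and $\min_{1\le j<i\le p_n} P(S_{j\setminus i}\subset \hat S_{j\setminus i})\to 1$ as $n\to\infty$; (4) (separation) $\min_{i,j}(\mu_{ij,1}-\mu_{ij,0})>\eta_n$, where $\eta_n=c_0 n^{-\kappa}$ for some constants $c_0>0$, $\kappa>0$; (5) (tail probability) $\sup_{i,j}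 P(|T_{ij}-\mu_{ij}|>\tfrac12\eta_n)=\exp\{-O(n^{\delta(\kappa)})\}$ for some positive number $\delta(\kappa)$ depending on $\kappa$. Let $\hat{\mathcal E}_n$ be the estimated network obtained by declaring, for each pair $(X_i,X_j)$, an edge ($e_{ij}=1$) if and only if $T_{ij}>\mu_{ij,0}+\eta_n/2$, i.e., using $\mu_{ij,0}+\eta_n/2$ as the critical value of the conditional independence test. Then $P\{\text{an error occurs in } \hat{\mathcal E}_n\}\to 0$ as $n\to\infty$, where an error means that for some pair $(i,j)$ the declared value differs from $e_{ij}$.
   Context: This is the consistency guarantee for the "double regression" procedure for learning an undirected Markov network (graphical model) of possibly non-Gaussian, nonlinearly dependent variables: for each variable $X_i$ one performs a (nonlinear) regression $X_i\sim\boldsymbol X_{V\setminus\{i\}}$ and selects $\hat S_i$; for each pair $j<i$ one performs a regression $X_j\sim \boldsymbol X_{V\setminus\{i,j\}}$ and selects $\hat S_{j\setminus i}$; then a nonparametric conditional independence test of $X_i$ and $X_j$ given $\boldsymbol X_{\hat S_i\cup\hat S_{j\setminus i}\setminus\{j\}}$ is performed with statistic $T_{ij}$. Here $\boldsymbol X_A=\{X_k:k\in A\}$ for $A\subset V$, and the "set of true variables" of a regression is the set of explanatory variables on which the conditional distribution of the response actually depends. The notation $\exp\{-O(n^{\delta})\}$ means a quantity bounded by $\exp(-c_1 n^{\delta})$ for some constant $c_1>0$ and all sufficiently large $n$. The suprema and minima over $i,j$ range over all pairs $1\le j<i\le p_n$. *)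

theory Defs
  imports "HOL-Probability.Probability" "HOL-Library.Landau_Symbols"
begin

definition gen_sets :: "'a measure \<Rightarrow> (nat \<Rightarrow> 'a \<Rightarrow> real) \<Rightarrow> nat set \<Rightarrow> 'a set set" where
  "gen_sets M Xs A = {Xs k -` B \<inter> space M | k B. k \<in> A \<and> B \<in> sets borel}"

definition cond_indep :: "'a measure \<Rightarrow> (nat \<Rightarrow> 'a \<Rightarrow> real) \<Rightarrow> nat set \<Rightarrow> nat set \<Rightarrow> nat set \<Rightarrow> bool" where
  "cond_indep M Xs I J K \<longleftrightarrow>
     (\<forall>a \<in> sigma_sets (space M) (gen_sets M Xs I).
      \<forall>b \<in> sigma_sets (space M) (gen_sets M Xs J).
        AE x in M. real_cond_exp M (sigma (space M) (gen_sets M Xs K)) (indicator (a \<inter> b)) x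
                 = real_cond_exp M (sigma (space M) (gen_sets M Xs K)) (indicator a) x
                   * real_cond_exp M (sigma (space M) (gen_sets M Xs K)) (indicator b) x)"

text \<open>Coordinate variables of the generative distribution on nat \<Rightarrow> real.\<close>
definition coord :: "nat \<Rightarrow> (nat \<Rightarrow> real) \<Rightarrow> real" where
  "coord i x = x i"

definition edge :: "(nat \<Rightarrow> real) measure \<Rightarrow> nat set \<Rightarrow> nat \<Rightarrow> nat \<Rightarrow> bool" where
  "edge P V i j \<longleftrightarrow> \<not> cond_indep P coord {i} {j} (V - {i, j})"

text \<open>Set of true variables of the regression of X_r on X_E: the (smallest) subset S of E
  such that the conditional distribution of X_r given X_E depends only on X_S, i.e.
  X_r is conditionally independent of X_(E-S) given X_S.\<close>
definition true_vars :: "(nat \<Rightarrow> real) measure \<Rightarrow> nat \<Rightarrow> nat set \<Rightarrow> nat set" where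
  "true_vars P r E = (THE S. S \<subseteq> E \<and> cond_indep P coord {r} (E - S) S \<and>
       (\<forall>S' \<subseteq> E. cond_indep P coord {r} (E - S') S' \<longrightarrow> S \<subseteq> S'))"

definition dag :: "nat set \<Rightarrow> (nat \<times> nat) set \<Rightarrow> bool" where
  "dag V G \<longleftrightarrow> G \<subseteq> V \<times> V \<and> acyclic G"

definition dpath :: "(nat \<times> nat) set \<Rightarrow> nat list \<Rightarrow> bool" where
  "dpath G xs \<longleftrightarrow> distinct xs \<and> length xs \<ge> 2 \<and>
     (\<forall>k. k + 1 < length xs \<longrightarrow> (xs!k, xs!(k+1)) \<in> G \<or> (xs!(k+1), xs!k) \<in> G)"

definition collider :: "(nat \<times> nat) set \<Rightarrow> nat list \<Rightarrow> nat \<Rightarrow> bool" where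
  "collider G xs k \<longleftrightarrow> (xs!(k-1), xs!k) \<in> G \<and> (xs!(k+1), xs!k) \<in> G"

definition blocked :: "(nat \<times> nat) set \<Rightarrow> nat set \<Rightarrow> nat list \<Rightarrow> bool" where
  "blocked G K xs \<longleftrightarrow> (\<exists>k. 0 < k \<and> k + 1 < length xs \<and>
     (if collider G xs k then (\<forall>w. (xs!k, w) \<in> G\<^sup>* \<longrightarrow> w \<notin> K) else xs!k \<in> K))"

definition d_separated :: "(nat \<times> nat) set \<Rightarrow> nat set \<Rightarrow> nat set \<Rightarrow> nat set \<Rightarrow> bool" where
  "d_separated G I J K \<longleftrightarrow>
     (\<forall>xs. dpath G xs \<and> hd xs \<in> I \<and> last xs \<in> J \<longrightarrow> blocked G K xs)"

definition markov_faithful_dag :: "(nat \<Rightarrow> real) measure \<Rightarrow> nat set \<Rightarrow> bool" where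
  "markov_faithful_dag P V \<longleftrightarrow> (\<exists>G. dag V G \<and>
     (\<forall>I J K. I \<subseteq> V \<and> J \<subseteq> V \<and> K \<subseteq> V \<and> I \<noteq> {} \<and> J \<noteq> {} \<and>
        I \<inter> J = {} \<and> I \<inter> K = {} \<and> J \<inter> K = {} \<longrightarrow>
        (d_separated G I J K \<longrightarrow> cond_indep P coord I J K) \<and>
        (cond_indep P coord I J K \<longrightarrow> d_separated G I J K)))"

end

theory Submission
  imports Defs "HOL-Real_Asymp.Real_Asymp"
begin

lemma aux1: "\<not> (a + e / 2 < (x::real)) \<Longrightarrow> e < b - a \<Longrightarrow> e / 2 < \<bar>x - b\<bar>"
  by (simp add: abs_if split: if_splits)

theorem theorem1:
  fixes M :: "nat \<Rightarrow> 'a measure"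
    and P :: "nat \<Rightarrow> (nat \<Rightarrow> real) measure"
    and p :: "nat \<Rightarrow> nat"
    and X :: "nat \<Rightarrow> nat \<Rightarrow> 'a \<Rightarrow> (nat \<Rightarrow> real)"
    and Shat :: "nat \<Rightarrow> nat \<Rightarrow> 'a \<Rightarrow> nat set"
    and Shat2 :: "nat \<Rightarrow> nat \<Rightarrow> nat \<Rightarrow> 'a \<Rightarrow> nat set"
    and T :: "nat \<Rightarrow> nat \<Rightarrow> nat \<Rightarrow> 'a \<Rightarrow> real"
    and mu0 mu1 :: "nat \<Rightarrow> nat \<Rightarrow> nat \<Rightarrow> real"
    and c0 \<kappa> :: real
  assumes prob_M: "\<And>n. prob_space (M n)"
    and prob_P: "\<And>n. prob_space (P n)"
    and sets_P: "\<And>n. sets (P n) = sets (Pi\<^sub>M UNIV (\<lambda>_. borel))"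
    and X_meas: "\<And>n k. k < n \<Longrightarrow> X n k \<in> measurable (M n) (Pi\<^sub>M UNIV (\<lambda>_. borel))"
    and X_indep: "\<And>n. prob_space.indep_vars (M n) (\<lambda>_. Pi\<^sub>M UNIV (\<lambda>_. borel)) (X n) {..<n}"
    and X_distr: "\<And>n k. k < n \<Longrightarrow> distr (M n) (Pi\<^sub>M UNIV (\<lambda>_. borel)) (X n k) = P n"
    and dag_assm: "\<And>n. markov_faithful_dag (P n) {1..p n}"
    and poly: "\<exists>a::nat. (\<lambda>n. real (p n)) \<in> O(\<lambda>n. real n ^ a)"
    and Shat_sub: "\<And>n i \<omega>. i \<in> {1..p n} \<Longrightarrow> Shat n i \<omega> \<subseteq> {1..p n} - {i}"
    and Shat2_sub: "\<And>n i j \<omega>. 1 \<le> j \<Longrightarrow> j < i \<Longrightarrow> i \<le> p n \<Longrightarrow>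
                      Shat2 n j i \<omega> \<subseteq> {1..p n} - {i, j}"
    and screen1: "\<And>\<epsilon>. \<epsilon> > 0 \<Longrightarrow> eventually (\<lambda>n. \<forall>i \<in> {1..p n}.
          measure (M n) {\<omega> \<in> space (M n). true_vars (P n) i ({1..p n} - {i}) \<subseteq> Shat n i \<omega>}
            \<ge> 1 - \<epsilon>) sequentially"
    and screen2: "\<And>\<epsilon>. \<epsilon> > 0 \<Longrightarrow> eventually (\<lambda>n. \<forall>i j. 1 \<le> j \<and> j < i \<and> i \<le> p n \<longrightarrow>
          measure (M n) {\<omega> \<in> space (M n). true_vars (P n) j ({1..p n} - {i, j}) \<subseteq> Shat2 n j i \<omega>}
            \<ge> 1 - \<epsilon>) sequentially"
    and T_meas: "\<And>n i j. T n i j \<in> borel_measurable (M n)"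
    and mean: "\<And>n i j. 1 \<le> j \<Longrightarrow> j < i \<Longrightarrow> i \<le> p n \<Longrightarrow>
          prob_space.expectation (M n) (T n i j)
            = (if edge (P n) {1..p n} i j then mu1 n i j else mu0 n i j)"
    and c0_pos: "c0 > 0" and kappa_pos: "\<kappa> > 0"
    and sep: "\<And>n i j. 1 \<le> j \<Longrightarrow> j < i \<Longrightarrow> i \<le> p n \<Longrightarrow>
          mu1 n i j - mu0 n i j > c0 * real n powr (-\<kappa>)"
    and tail: "\<exists>\<delta> > 0. \<exists>c1 > 0. eventually (\<lambda>n. \<forall>i j. 1 \<le> j \<and> j < i \<and> i \<le> p n \<longrightarrow>
          measure (M n) {\<omega> \<in> space (M n).
              \<bar>T n i j \<omega> - prob_space.expectation (M n) (T n i j)\<bar> > c0 * real n powr (-\<kappa>) / 2}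
            \<le> exp (- c1 * real n powr \<delta>)) sequentially"
  shows "(\<lambda>n. measure (M n) {\<omega> \<in> space (M n). \<exists>i j. 1 \<le> j \<and> j < i \<and> i \<le> p n \<and>
            ((T n i j \<omega> > mu0 n i j + c0 * real n powr (-\<kappa>) / 2) \<noteq> edge (P n) {1..p n} i j)})
         \<longlonglongrightarrow> 0"
proof -
  obtain \<delta> c1 where d: "\<delta> > 0" and c1: "c1 > 0" and ev1: "eventually (\<lambda>n. \<forall>i j. 1 \<le> j \<and> j < i \<and> i \<le> p n \<longrightarrow>
          measure (M n) {\<omega> \<in> space (M n).
              \<bar>T n i j \<omega> - prob_space.expectation (M n) (T n i j)\<bar> > c0 * real n powr (-\<kappa>) / 2}
            \<le> exp (- c1 * real n powr \<delta>)) sequentially"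
    using tail by blast
  obtain a :: nat where a: "(\<lambda>n. real (p n)) \<in> O(\<lambda>n. real n ^ a)" using poly by blast
  then obtain C where C: "C > 0" and evC: "eventually (\<lambda>n. norm (real (p n)) \<le> C * norm (real n ^ a)) sequentially"
    by (rule landau_o.bigE)
  define err where "err n = {\<omega> \<in> space (M n). \<exists>i j. 1 \<le> j \<and> j < i \<and> i \<le> p n \<and>
            ((T n i j \<omega> > mu0 n i j + c0 * real n powr (-\<kappa>) / 2) \<noteq> edge (P n) {1..p n} i j)}" for n
  define A where "A n ij = {\<omega> \<in> space (M n).
              \<bar>T n (fst ij) (snd ij) \<omega> - prob_space.expectation (M n) (T n (fst ij) (snd ij))\<bar> > c0 * real n powr (-\<kappa>) / 2}" for n ij
  define I where "I n = Sigma {1..p n} (\<lambda>i. {1..<i})" for n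
  have finI: "finite (I n)" for n unfolding I_def by auto
  have cardI: "card (I n) \<le> p n * p n" for n
  proof -
    have "I n \<subseteq> {1..p n} \<times> {1..p n}" unfolding I_def by auto
    then have "card (I n) \<le> card ({1..p n} \<times> {1..p n})" by (intro card_mono) auto
    then show ?thesis by (simp add: card_cartesian_product)
  qed
  have Ameas: "A n ij \<in> sets (M n)" for n ij
    unfolding A_def using T_meas by measurable
  have sub: "err n \<subseteq> (\<Union>ij\<in>I n. A n ij)" for n
  proof
    fix \<omega> assume "\<omega> \<in> err n"
    then obtain i j where w: "\<omega> \<in> space (M n)" and ij: "1 \<le> j" "j < i" "i \<le> p n"
      and ne: "(T n i j \<omega> > mu0 n i j + c0 * real n powr (-\<kappa>) / 2) \<noteq> edge (P n) {1..p n} i j"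
      unfolding err_def by blast
    have s: "mu1 n i j - mu0 n i j > c0 * real n powr (-\<kappa>)" using sep ij by blast
    have m: "prob_space.expectation (M n) (T n i j) = (if edge (P n) {1..p n} i j then mu1 n i j else mu0 n i j)"
      using mean ij by blast
    have "\<bar>T n i j \<omega> - prob_space.expectation (M n) (T n i j)\<bar> > c0 * real n powr (-\<kappa>) / 2"
    proof (cases "edge (P n) {1..p n} i j")
      case True then show ?thesis using ne s m aux1 by auto
    next
      case False
      have "0 \<le> c0 * real n powr (-\<kappa>)" using c0_pos by simp
      then show ?thesis using False ne s m by auto
    qed
    moreover have "(i, j) \<in> I n" unfolding I_def using ij by auto
    ultimately show "\<omega> \<in> (\<Union>ij\<in>I n. A n ij)" unfolding A_def using w by force
  qed
  have bound: "eventually (\<lambda>n. measure (M n) (err n) \<le> (C * real n ^ a) ^ 2 * exp (- c1 * real n powr \<delta>)) sequentially"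
    using ev1 evC
  proof eventually_elim
    case (elim n)
    interpret pm: prob_space "M n" by (rule prob_M)
    have "measure (M n) (err n) \<le> measure (M n) (\<Union>ij\<in>I n. A n ij)"
      using sub Ameas finI by (intro pm.finite_measure_mono) auto
    also have "\<dots> \<le> (\<Sum>ij\<in>I n. measure (M n) (A n ij))"
      using finI Ameas by (intro measure_UNION_le) auto
    also have "\<dots> \<le> (\<Sum>ij\<in>I n. exp (- c1 * real n powr \<delta>))"
    proof (intro sum_mono)
      fix ij assume "ij \<in> I n"
      then show "measure (M n) (A n ij) \<le> exp (- c1 * real n powr \<delta>)"
        using elim(1) unfolding A_def I_def by (cases ij) auto
    qed
    also have "\<dots> = real (card (I n)) * exp (- c1 * real n powr \<delta>)" by simp
    also have "\<dots> \<le> (real (p n) * real (p n)) * exp (- c1 * real n powr \<delta>)"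
      using cardI[of n] by (intro mult_right_mono) (simp_all add: of_nat_mult[symmetric] del: of_nat_mult)
    also have "\<dots> \<le> (C * real n ^ a) ^ 2 * exp (- c1 * real n powr \<delta>)"
    proof (intro mult_right_mono)
      have "real (p n) \<le> C * real n ^ a" using elim(2) by simp
      then show "real (p n) * real (p n) \<le> (C * real n ^ a) ^ 2"
        by (simp add: power2_eq_square mult_mono)
    qed simp
    finally show ?case .
  qed
  have lim: "(\<lambda>n. (C * real n ^ a) ^ 2 * exp (- c1 * real n powr \<delta>)) \<longlonglongrightarrow> 0"
  proof -
    define k where "k = nat \<lceil>2 * real a / \<delta>\<rceil>"
    have kd: "2 * real a \<le> \<delta> * real k"
    proof -
      have "2 * real a / \<delta> \<le> real k" unfolding k_def by linarith
      then show ?thesis using d by (simp add: field_simps)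
    qed
    define h where "h n = c1 * real n powr \<delta>" for n :: nat
    have hlim: "filterlim h at_top sequentially"
      unfolding h_def
      by (rule filterlim_tendsto_pos_mult_at_top[OF tendsto_const c1
            filterlim_compose[OF real_powr_at_top[OF d] filterlim_real_sequentially]])
    have glim: "(\<lambda>n. (C\<^sup>2 * (1 / c1) ^ k) * (h n ^ k / exp (h n))) \<longlonglongrightarrow> 0"
      using tendsto_mult_right_zero[OF filterlim_compose[OF tendsto_power_div_exp_0 hlim]]
      by (simp add: o_def)
    have ev: "eventually (\<lambda>n. (C * real n ^ a) ^ 2 * exp (- c1 * real n powr \<delta>)
               \<le> (C\<^sup>2 * (1 / c1) ^ k) * (h n ^ k / exp (h n))) sequentially"
      using eventually_ge_at_top[of "1::nat"]
    proof eventually_elim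
      case (elim n)
      have n1: "real n \<ge> 1" using elim by simp
      have "real n ^ (2 * a) = real n powr (2 * real a)"
        using n1 powr_realpow[of "real n" "2 * a"] by simp
      also have "\<dots> \<le> real n powr (\<delta> * real k)"
        using n1 kd by (intro powr_mono) auto
      also have "\<dots> = (real n powr \<delta>) ^ k"
        using n1 by (simp add: powr_powr[symmetric] powr_realpow)
      finally have A: "real n ^ (2 * a) \<le> (real n powr \<delta>) ^ k" .
      have hk: "(1 / c1) ^ k * h n ^ k = (real n powr \<delta>) ^ k"
        using c1 unfolding h_def by (simp add: power_mult_distrib[symmetric])
      have "(C * real n ^ a) ^ 2 * exp (- c1 * real n powr \<delta>) = C\<^sup>2 * real n ^ (2 * a) / exp (h n)"
        unfolding h_def by (simp add: power_mult_distrib power_mult[symmetric] exp_minus field_simps mult.commute)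
      also have "\<dots> \<le> C\<^sup>2 * (real n powr \<delta>) ^ k / exp (h n)"
        using A by (intro divide_right_mono mult_left_mono) auto
      also have "\<dots> = (C\<^sup>2 * (1 / c1) ^ k) * (h n ^ k / exp (h n))"
        unfolding hk[symmetric] by simp
      finally show ?case .
    qed
    show ?thesis
    proof (rule tendsto_sandwich[OF _ ev tendsto_const glim])
      show "eventually (\<lambda>n. 0 \<le> (C * real n ^ a) ^ 2 * exp (- c1 * real n powr \<delta>)) sequentially" by simp
    qed
  qed
  show ?thesis
    unfolding err_def[symmetric]
  proof (rule tendsto_sandwich[OF _ bound tendsto_const lim])
    show "eventually (\<lambda>n. 0 \<le> measure (M n) (err n)) sequentially" by simp
  qed
qed

end
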